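(* Let $\mathbb{T}$ be a time scale unbounded from above, $t_0\in\mathbb{T}$, and let $b,c$ be constants with $0\le b<c$. Let $x_0>0$, $y_0>0$, $z_0\ge0$, $N=x_0+y_0+z_0$. Then every solution $(x,y,z)$ of $$x^{\Delta}=-\frac{b\,x\,y^{\sigma}}{x+y},\qquad y^{\Delta}=\frac{b\,x\,y^{\sigma}}{x+y}-c\,y^{\sigma},\qquad z^{\Delta}=c\,y^{\sigma},$$ with $x,y:\mathbb{T}\to(0,\infty)$, $z:\mathbb{T}\to[0,\infty)$, $x(t_0)=x_0$, $y(t_0)=y_0$, $z(t_0)=z_0$, converges as $t\to\infty$ to $(\alpha,0,N-\alpha)$ for some $\alpha\in(0,N)$.
   Context: A time scale $\mathbb{T}$ is a nonempty closed subset of $\mathbb{R}$. $\sigma(t)=\inf\{s\in\mathbb{T}:s>t\}$, $f^{\sigma}=f\circ\sigma$. $f^{\Delta}$ is the delta (Hilger) derivative: for every $\varepsilon>0$ there is $\delta>0$ with $|f(\sigma(t))-f(s)-f^{\Delta}(t)(\sigma(t)-s)|\le\varepsilon|\sigma(t)-s|$ for $s\in(t-\delta,t+\delta)\cap\mathbb{T}$. *)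

theory Defs
  imports "HOL-Analysis.Analysis"
begin

definition time_scale :: "real set \<Rightarrow> bool" where
  "time_scale T \<longleftrightarrow> T \<noteq> {} \<and> closed T"

definition fwd_jump :: "real set \<Rightarrow> real \<Rightarrow> real" where
  "fwd_jump T t = (if {s\<in>T. s > t} = {} then t else Inf {s\<in>T. s > t})"

definition has_delta_derivative :: "real set \<Rightarrow> (real \<Rightarrow> real) \<Rightarrow> real \<Rightarrow> real \<Rightarrow> bool" where
  "has_delta_derivative T f D t \<longleftrightarrow>
     (\<forall>\<epsilon>>0. \<exists>\<delta>>0. \<forall>s\<in>T. \<bar>s - t\<bar> < \<delta> \<longrightarrow>
        \<bar>f (fwd_jump T t) - f s - D * (fwd_jump T t - s)\<bar> \<le> \<epsilon> * \<bar>fwd_jump T t - s\<bar>)"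

end

theory Submission
  imports Defs
begin


lemma fj_in:
  assumes "closed T" "\<forall>r. \<exists>t\<in>T. t > r"
  shows "fwd_jump T t \<in> T \<and> t \<le> fwd_jump T t"
proof -
  define S where "S = {s\<in>T. s>t}"
  have ne: "S \<noteq> {}" using assms(2) unfolding S_def by auto
  have bdd: "bdd_below S" unfolding bdd_below_def S_def by (intro exI[of _ t]) auto
  have "Inf S \<in> closure S" using closure_contains_Inf ne bdd by blast
  moreover have "closure S \<subseteq> T" using closure_minimal[of S T] assms(1) unfolding S_def by auto
  moreover have "t \<le> Inf S" using ne by (intro cInf_greatest) (auto simp: S_def)
  moreover have "fwd_jump T t = Inf S" using ne unfolding fwd_jump_def S_def by auto
  ultimately show ?thesis by auto
qed
lemma delta_cont:
  assumes "has_delta_derivative T f D t" "t \<in> T" "\<eta> > 0"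
  shows "\<exists>\<delta>>0. \<forall>r\<in>T. \<bar>r - t\<bar> < \<delta> \<longrightarrow> \<bar>f r - f t\<bar> < \<eta>"
proof -
  define \<sigma> where "\<sigma> = fwd_jump T t"
  define d where "d = \<bar>\<sigma> - t\<bar>"
  have d0: "d \<ge> 0" unfolding d_def by simp
  define \<epsilon> where "\<epsilon> = \<eta> / (4 * d + 2)"
  have "4 * d + 2 > 0" using d0 by linarith
  hence ep: "\<epsilon> > 0" using assms(3) unfolding \<epsilon>_def by (auto intro!: divide_pos_pos)
  obtain \<delta>1 where d1: "\<delta>1 > 0" and H: "\<forall>s\<in>T. \<bar>s - t\<bar> < \<delta>1 \<longrightarrow>
        \<bar>f \<sigma> - f s - D * (\<sigma> - s)\<bar> \<le> \<epsilon> * \<bar>\<sigma> - s\<bar>"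
    using assms(1) ep unfolding has_delta_derivative_def \<sigma>_def by blast
  define A where "A = \<bar>D\<bar>"
  have A0: "A \<ge> 0" unfolding A_def by simp
  define \<delta> where "\<delta> = min \<delta>1 (min 1 (\<eta> / (2 * A + 2)))"
  have "2 * A + 2 > 0" using A0 by linarith
  hence dp: "\<delta> > 0" using d1 assms(3) unfolding \<delta>_def by auto
  show ?thesis
  proof (intro exI[of _ \<delta>] conjI dp ballI impI)
    fix r assume r: "r \<in> T" "\<bar>r - t\<bar> < \<delta>"
    define e where "e = \<bar>r - t\<bar>"
    have e0: "e \<ge> 0" "e < \<delta>" using r unfolding e_def by auto
    have h1: "\<bar>f \<sigma> - f r - D * (\<sigma> - r)\<bar> \<le> \<epsilon> * \<bar>\<sigma> - r\<bar>" using H r d1 unfolding \<delta>_def by auto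
    have h2: "\<bar>f \<sigma> - f t - D * (\<sigma> - t)\<bar> \<le> \<epsilon> * d" using H assms(2) d1 unfolding d_def by auto
    have tri: "\<bar>\<sigma> - r\<bar> \<le> d + e" unfolding d_def e_def by linarith
    have h4: "\<bar>D * (r - t)\<bar> = A * e" unfolding A_def e_def by (simp add: abs_mult)
    have h3: "\<bar>f r - f t\<bar> \<le> \<bar>D * (r - t)\<bar> + \<bar>f \<sigma> - f r - D * (\<sigma> - r)\<bar> + \<bar>f \<sigma> - f t - D * (\<sigma> - t)\<bar>"
    proof -
      have "f r - f t = D * (r - t) - (f \<sigma> - f r - D * (\<sigma> - r)) + (f \<sigma> - f t - D * (\<sigma> - t))"
        by (simp add: algebra_simps)
      then show ?thesis by (smt (verit))
    qed
    have e1: "\<epsilon> * \<bar>\<sigma> - r\<bar> \<le> \<epsilon> * (d + e)" using tri ep by (intro mult_left_mono) auto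
    have "e < 1" using e0 unfolding \<delta>_def by auto
    hence "\<epsilon> * (d + e) + \<epsilon> * d \<le> \<epsilon> * (4 * d + 2) / 2" using ep d0 by (simp add: algebra_simps)
    also have "\<epsilon> * (4 * d + 2) = \<eta>" unfolding \<epsilon>_def using \<open>4 * d + 2 > 0\<close> by simp
    finally have e2: "\<epsilon> * (d + e) + \<epsilon> * d \<le> \<eta> / 2" .
    have "e < \<eta> / (2 * A + 2)" using e0 unfolding \<delta>_def by auto
    hence "e * (2 * A + 2) < \<eta>" using \<open>2 * A + 2 > 0\<close> by (simp add: field_simps)
    hence e3: "A * e < \<eta> / 2" using e0 by (simp add: algebra_simps)
    show "\<bar>f r - f t\<bar> < \<eta>" using h1 h2 h3 h4 e1 e2 e3 by linarith
  qed
qed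


lemma delta_mono_eps:
  assumes cl: "closed T" and sT: "s \<in> T" and tT: "t \<in> T" and st: "s \<le> t"
    and der: "\<forall>\<tau>\<in>T. s \<le> \<tau> \<and> \<tau> \<le> t \<longrightarrow> has_delta_derivative T f (D \<tau>) \<tau> \<and> D \<tau> \<ge> 0"
    and ep: "\<epsilon> > 0"
  shows "f t - f s \<ge> - (\<epsilon> * (t - s))"
proof (rule ccontr)
  assume nt: "\<not> ?thesis"
  define B where "B = {u \<in> T. s \<le> u \<and> u \<le> t \<and> f u - f s < - (\<epsilon> * (u - s))}"
  have tB: "t \<in> B" using nt tT st by (auto simp: B_def)
  have Bne: "B \<noteq> {}" using tB by auto
  have Bbdd: "bdd_below B" unfolding bdd_below_def B_def by (intro exI[of _ s]) auto
  define m where "m = Inf B"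
  have sm: "s \<le> m" unfolding m_def using Bne by (intro cInf_greatest) (auto simp: B_def)
  have mt: "m \<le> t" unfolding m_def using tB Bbdd by (rule cInf_lower)
  have lowB: "\<And>u. u \<in> B \<Longrightarrow> m \<le> u" unfolding m_def using Bbdd by (simp add: cInf_lower)
  have "m \<in> closure B" unfolding m_def using closure_contains_Inf Bne Bbdd by blast
  moreover have "closure B \<subseteq> T" using closure_minimal[of B T] cl unfolding B_def by auto
  ultimately have mT: "m \<in> T" by auto
  have good: "f u - f s \<ge> - (\<epsilon> * (u - s))" if "u \<in> T" "s \<le> u" "u < m" for u
  proof (rule ccontr)
    assume "\<not> ?thesis"
    hence "u \<in> B" using that mt unfolding B_def by auto
    thus False using lowB that by force
  qed
  show False
  proof (cases "m \<in> B")
    case True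
    hence mf: "f m - f s < - (\<epsilon> * (m - s))" unfolding B_def by auto
    have "m \<noteq> s" using mf by auto
    hence sm': "s < m" using sm by auto
    define g where "g = f m - f s + \<epsilon> * (m - s)"
    have g0: "g < 0" using mf unfolding g_def by linarith
    have dm: "has_delta_derivative T f (D m) m" using der mT sm mt by auto
    obtain \<delta> where dpos: "\<delta> > 0" and cont: "\<forall>r\<in>T. \<bar>r - m\<bar> < \<delta> \<longrightarrow> \<bar>f r - f m\<bar> < - g / 2"
      using delta_cont[OF dm mT, of "- g / 2"] g0 by auto
    define \<delta>2 where "\<delta>2 = min \<delta> (m - s)"
    have d2: "\<delta>2 > 0" "\<delta>2 \<le> \<delta>" "\<delta>2 \<le> m - s" using dpos sm' unfolding \<delta>2_def by auto
    have gap: "\<not> (m - \<delta>2 < u \<and> u < m)" if uT: "u \<in> T" for u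
    proof
      assume u: "m - \<delta>2 < u \<and> u < m"
      have "\<bar>u - m\<bar> < \<delta>" using u d2 by auto
      hence "\<bar>f u - f m\<bar> < - g / 2" using cont uT by auto
      moreover have "\<epsilon> * (u - m) < 0" using u ep by (simp add: mult_pos_neg)
      moreover have "f u - f s + \<epsilon> * (u - s) = g + (f u - f m) + \<epsilon> * (u - m)"
        unfolding g_def by (simp add: algebra_simps)
      ultimately have "f u - f s + \<epsilon> * (u - s) < 0" using g0 by linarith
      hence "u \<in> B" using u uT d2 mt unfolding B_def by (auto simp: algebra_simps)
      thus False using lowB u by force
    qed
    define C where "C = T \<inter> {s..m - \<delta>2}"
    have sC: "s \<in> C" using sT d2 unfolding C_def by auto
    have Ccl: "closed C" unfolding C_def using cl by (intro closed_Int) auto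
    have Cbdd: "bdd_above C" unfolding C_def by (rule bdd_above_Int2) auto
    define p where "p = Sup C"
    have pC: "p \<in> C" unfolding p_def using closed_contains_Sup[of C] sC Cbdd Ccl by auto
    hence pT: "p \<in> T" and sp: "s \<le> p" and pm: "p \<le> m - \<delta>2" unfolding C_def by auto
    have upC: "\<And>u. u \<in> C \<Longrightarrow> u \<le> p" unfolding p_def using Cbdd by (simp add: cSup_upper)
    have sig: "fwd_jump T p = m"
    proof -
      have mS: "m \<in> {u\<in>T. u > p}" using mT pm d2 by auto
      have minS: "\<And>u. u \<in> {u\<in>T. u > p} \<Longrightarrow> m \<le> u"
      proof -
        fix u assume u: "u \<in> {u\<in>T. u > p}"
        show "m \<le> u"
        proof (rule ccontr)
          assume um: "\<not> m \<le> u"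
          show False
          proof (cases "u \<le> m - \<delta>2")
            case True
            hence "u \<in> C" using u sp unfolding C_def by auto
            thus False using upC u by force
          next
            case False
            thus False using gap[of u] u um by auto
          qed
        qed
      qed
      have "Inf {u\<in>T. u > p} = m" using mS minS by (intro cInf_eq_minimum) auto
      thus ?thesis unfolding fwd_jump_def using mS by auto
    qed
    have dp: "has_delta_derivative T f (D p) p \<and> D p \<ge> 0" using der pT sp pm d2 mt by auto
    then obtain \<delta>3 where "\<delta>3 > 0" and H3: "\<forall>r\<in>T. \<bar>r - p\<bar> < \<delta>3 \<longrightarrow>
        \<bar>f m - f r - D p * (m - r)\<bar> \<le> \<epsilon> * \<bar>m - r\<bar>"
      using ep unfolding has_delta_derivative_def sig by blast
    hence "\<bar>f m - f p - D p * (m - p)\<bar> \<le> \<epsilon> * \<bar>m - p\<bar>" using pT by auto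
    moreover have "\<bar>m - p\<bar> = m - p" using pm d2 by auto
    moreover have "D p * (m - p) \<ge> 0" using dp pm d2 by auto
    ultimately have "f m - f p \<ge> - (\<epsilon> * (m - p))" by linarith
    moreover have "f p - f s \<ge> - (\<epsilon> * (p - s))" using good[OF pT sp] pm d2 by auto
    moreover have "\<epsilon> * (m - p) + \<epsilon> * (p - s) = \<epsilon> * (m - s)" by (simp add: algebra_simps)
    ultimately have "f m - f s \<ge> - (\<epsilon> * (m - s))" by linarith
    thus False using mf by linarith
  next
    case False
    hence Pm: "f m - f s \<ge> - (\<epsilon> * (m - s))" using mT sm mt unfolding B_def by auto
    have near: "\<exists>u\<in>B. m < u \<and> u < m + \<eta>" if "\<eta> > 0" for \<eta>
    proof -
      have "Inf B < m + \<eta>" using that unfolding m_def by auto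
      then obtain u where "u \<in> B" "u < m + \<eta>" using cInf_less_iff[OF Bne Bbdd] by auto
      moreover have "u \<noteq> m" using False \<open>u \<in> B\<close> by auto
      ultimately show ?thesis using lowB by force
    qed
    have sig: "fwd_jump T m = m"
    proof -
      obtain u0 where "u0 \<in> B" "m < u0" using near[of 1] by auto
      hence ne: "{u\<in>T. u > m} \<noteq> {}" unfolding B_def by auto
      have ge: "m \<le> Inf {u\<in>T. u > m}" using ne by (intro cInf_greatest) auto
      have le: "Inf {u\<in>T. u > m} \<le> m"
      proof (rule ccontr)
        assume "\<not> ?thesis"
        then obtain u where u: "u \<in> B" "m < u" "u < Inf {u\<in>T. u > m}"
          using near[of "Inf {u\<in>T. u > m} - m"] by auto
        have "u \<in> {u\<in>T. u > m}" using u unfolding B_def by auto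
        hence "Inf {u\<in>T. u > m} \<le> u" by (intro cInf_lower) (auto intro: bdd_belowI[where m=m])
        thus False using u by auto
      qed
      show ?thesis using ge le ne unfolding fwd_jump_def by auto
    qed
    have dm: "has_delta_derivative T f (D m) m \<and> D m \<ge> 0" using der mT sm mt by auto
    then obtain \<delta>3 where d3: "\<delta>3 > 0" and H3: "\<forall>r\<in>T. \<bar>r - m\<bar> < \<delta>3 \<longrightarrow>
        \<bar>f m - f r - D m * (m - r)\<bar> \<le> \<epsilon> * \<bar>m - r\<bar>"
      using ep unfolding has_delta_derivative_def sig by blast
    obtain u where u: "u \<in> B" "m < u" "u < m + \<delta>3" using near[OF d3] by auto
    have uT: "u \<in> T" using u unfolding B_def by auto
    have "\<bar>f m - f u - D m * (m - u)\<bar> \<le> \<epsilon> * \<bar>m - u\<bar>" using H3 uT u by auto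
    moreover have "\<bar>m - u\<bar> = u - m" using u by auto
    moreover have "D m * (u - m) \<ge> 0" using dm u by auto
    moreover have "\<epsilon> * \<bar>m - u\<bar> = \<epsilon> * (u - m)" using u by simp
    moreover have "D m * (m - u) = - (D m * (u - m))" by (simp add: algebra_simps)
    ultimately have "f u - f m \<ge> - (\<epsilon> * (u - m))" by linarith
    moreover have "\<epsilon> * (u - m) + \<epsilon> * (m - s) = \<epsilon> * (u - s)" by (simp add: algebra_simps)
    ultimately have "f u - f s \<ge> - (\<epsilon> * (u - s))" using Pm by linarith
    thus False using u unfolding B_def by auto
  qed
qed

lemma delta_mono:
  assumes cl: "closed T" and sT: "s \<in> T" and tT: "t \<in> T" and st: "s \<le> t"
    and der: "\<forall>\<tau>\<in>T. s \<le> \<tau> \<and> \<tau> \<le> t \<longrightarrow> has_delta_derivative T f (D \<tau>) \<tau> \<and> D \<tau> \<ge> 0"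
  shows "f s \<le> f t"
proof (rule ccontr)
  assume "\<not> ?thesis"
  hence lt: "f t < f s" by auto
  hence "s \<noteq> t" by auto
  hence st': "s < t" using st by auto
  define \<epsilon> where "\<epsilon> = (f s - f t) / (2 * (t - s))"
  have ep: "\<epsilon> > 0" unfolding \<epsilon>_def using lt st' by auto
  have "f t - f s \<ge> - (\<epsilon> * (t - s))" by (rule delta_mono_eps[OF cl sT tT st der ep])
  moreover have "2 * (\<epsilon> * (t - s)) = f s - f t" unfolding \<epsilon>_def using st' by (simp add: field_simps)
  ultimately show False using lt by linarith
qed


lemma delta_lin:
  assumes "has_delta_derivative T f D t" "has_delta_derivative T g E t"
  shows "has_delta_derivative T (\<lambda>u. a * f u + b * g u) (a * D + b * E) t"
  unfolding has_delta_derivative_def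
proof (intro allI impI)
  fix \<epsilon> :: real assume ep: "\<epsilon> > 0"
  define K where "K = \<bar>a\<bar> + \<bar>b\<bar> + 1"
  have K0: "K > 0" unfolding K_def by (smt (verit) abs_ge_zero)
  define \<epsilon>1 where "\<epsilon>1 = \<epsilon> / K"
  have e1: "\<epsilon>1 > 0" unfolding \<epsilon>1_def using ep K0 by simp
  define \<sigma> where "\<sigma> = fwd_jump T t"
  obtain d1 where d1: "d1 > 0" "\<forall>s\<in>T. \<bar>s - t\<bar> < d1 \<longrightarrow> \<bar>f \<sigma> - f s - D * (\<sigma> - s)\<bar> \<le> \<epsilon>1 * \<bar>\<sigma> - s\<bar>"
    using assms(1) e1 unfolding has_delta_derivative_def \<sigma>_def by blast
  obtain d2 where d2: "d2 > 0" "\<forall>s\<in>T. \<bar>s - t\<bar> < d2 \<longrightarrow> \<bar>g \<sigma> - g s - E * (\<sigma> - s)\<bar> \<le> \<epsilon>1 * \<bar>\<sigma> - s\<bar>"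
    using assms(2) e1 unfolding has_delta_derivative_def \<sigma>_def by blast
  show "\<exists>\<delta>>0. \<forall>s\<in>T. \<bar>s - t\<bar> < \<delta> \<longrightarrow>
      \<bar>a * f (fwd_jump T t) + b * g (fwd_jump T t) - (a * f s + b * g s) - (a * D + b * E) * (fwd_jump T t - s)\<bar>
        \<le> \<epsilon> * \<bar>fwd_jump T t - s\<bar>"
  proof (intro exI[of _ "min d1 d2"] conjI ballI impI)
    show "min d1 d2 > 0" using d1 d2 by auto
    fix s assume sT: "s \<in> T" and sd: "\<bar>s - t\<bar> < min d1 d2"
    define X where "X = f \<sigma> - f s - D * (\<sigma> - s)"
    define Y where "Y = g \<sigma> - g s - E * (\<sigma> - s)"
    define w where "w = \<bar>\<sigma> - s\<bar>"
    have w0: "w \<ge> 0" unfolding w_def by simp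
    have hX: "\<bar>X\<bar> \<le> \<epsilon>1 * w" using d1 sT sd unfolding X_def w_def by auto
    have hY: "\<bar>Y\<bar> \<le> \<epsilon>1 * w" using d2 sT sd unfolding Y_def w_def by auto
    have eq: "a * f \<sigma> + b * g \<sigma> - (a * f s + b * g s) - (a * D + b * E) * (\<sigma> - s) = a * X + b * Y"
      unfolding X_def Y_def by (simp add: algebra_simps)
    have "\<bar>a * X + b * Y\<bar> \<le> \<bar>a\<bar> * \<bar>X\<bar> + \<bar>b\<bar> * \<bar>Y\<bar>" by (metis abs_triangle_ineq abs_mult)
    also have "\<dots> \<le> \<bar>a\<bar> * (\<epsilon>1 * w) + \<bar>b\<bar> * (\<epsilon>1 * w)"
      using hX hY by (intro add_mono mult_left_mono) auto
    also have "\<dots> = (\<bar>a\<bar> + \<bar>b\<bar>) * \<epsilon>1 * w" by (simp add: algebra_simps)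
    also have "\<dots> \<le> K * \<epsilon>1 * w" unfolding K_def using e1 w0 by (intro mult_right_mono) auto
    also have "K * \<epsilon>1 = \<epsilon>" unfolding \<epsilon>1_def using K0 by simp
    finally show "\<bar>a * f (fwd_jump T t) + b * g (fwd_jump T t) - (a * f s + b * g s) - (a * D + b * E) * (fwd_jump T t - s)\<bar>
        \<le> \<epsilon> * \<bar>fwd_jump T t - s\<bar>" using eq unfolding \<sigma>_def w_def by simp
  qed
qed

lemma delta_lin2:
  assumes "has_delta_derivative T f D t" "has_delta_derivative T g E t"
    "\<And>u. h u = a * f u + b * g u" "D' = a * D + b * E"
  shows "has_delta_derivative T h D' t"
proof -
  have "h = (\<lambda>u. a * f u + b * g u)" using assms(3) by auto
  thus ?thesis using delta_lin[OF assms(1,2), of a b] assms(4) by simp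
qed

lemma delta_id: "has_delta_derivative T (\<lambda>u. u) 1 t"
  unfolding has_delta_derivative_def
  by (intro allI impI exI[of _ 1] conjI ballI) simp_all

lemma delta_const:
  assumes cl: "closed T" and sT: "s \<in> T" and tT: "t \<in> T"
    and der: "\<forall>\<tau>\<in>T. has_delta_derivative T f 0 \<tau>"
  shows "f s = f t"
proof -
  have der2: "\<forall>\<tau>\<in>T. has_delta_derivative T (\<lambda>u. - f u) 0 \<tau>"
  proof
    fix \<tau> assume "\<tau> \<in> T"
    hence d: "has_delta_derivative T f 0 \<tau>" using der by auto
    show "has_delta_derivative T (\<lambda>u. - f u) 0 \<tau>"
      by (rule delta_lin2[OF d d, where a="-1" and b=0]) simp_all
  qed
  have A: "f a \<le> f b \<and> - f a \<le> - f b" if "a \<in> T" "b \<in> T" "a \<le> b" for a b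
  proof
    show "f a \<le> f b" using delta_mono[OF cl that, of f "\<lambda>_. 0"] der by auto
    show "- f a \<le> - f b" using delta_mono[OF cl that, of "\<lambda>u. - f u" "\<lambda>_. 0"] der2 by auto
  qed
  show ?thesis
  proof (cases "s \<le> t")
    case True thus ?thesis using A[OF sT tT] by auto
  next
    case False thus ?thesis using A[OF tT sT] by auto
  qed
qed

lemma antimono_lim:
  fixes f :: "real \<Rightarrow> real"
  assumes mono: "\<forall>s\<in>T. \<forall>t\<in>T. s \<le> t \<longrightarrow> f t \<le> f s" and lb: "\<forall>t\<in>T. f t \<ge> l" and ne: "T \<noteq> {}"
  shows "(f \<longlongrightarrow> Inf (f ` T)) (inf at_top (principal T))"
proof (rule order_tendstoI)
  have bdd: "bdd_below (f ` T)" unfolding bdd_below_def using lb by (intro exI[of _ l]) simp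
  fix a assume a: "a < Inf (f ` T)"
  have "a < f u" if "u \<in> T" for u
  proof -
    have "Inf (f ` T) \<le> f u" using that bdd by (simp add: cInf_lower)
    thus ?thesis using a by linarith
  qed
  hence "\<forall>u. u \<in> T \<longrightarrow> a < f u" by blast
  hence "eventually (\<lambda>u. u \<in> T \<longrightarrow> a < f u) at_top" by (rule always_eventually)
  thus "eventually (\<lambda>u. a < f u) (inf at_top (principal T))"
    unfolding eventually_inf_principal .
next
  fix a assume a: "Inf (f ` T) < a"
  have "f ` T \<noteq> {}" using ne by simp
  hence "\<exists>v\<in>f ` T. v < a" by (rule cInf_lessD) (rule a)
  then obtain v where "v \<in> f ` T" "v < a" by blast
  then obtain u1 where u1: "u1 \<in> T" "f u1 < a" by auto
  have "u \<in> T \<longrightarrow> f u < a" if "u \<ge> u1" for u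
  proof
    assume "u \<in> T"
    have "\<forall>t\<in>T. u1 \<le> t \<longrightarrow> f t \<le> f u1" using mono u1(1) by simp
    hence "f u \<le> f u1" using \<open>u \<in> T\<close> that by simp
    thus "f u < a" using u1 by linarith
  qed
  hence "eventually (\<lambda>u. u \<in> T \<longrightarrow> f u < a) at_top"
    unfolding eventually_at_top_linorder by blast
  thus "eventually (\<lambda>u. f u < a) (inf at_top (principal T))"
    unfolding eventually_inf_principal .
qed

lemma F_nb:
  assumes "\<forall>r. \<exists>t\<in>T. t > (r::real)"
  shows "inf at_top (principal T) \<noteq> bot"
proof
  assume "inf at_top (principal T) = bot"
  hence "eventually (\<lambda>_. False) (inf at_top (principal T))" by simp
  hence "eventually (\<lambda>u. u \<in> T \<longrightarrow> False) at_top" unfolding eventually_inf_principal .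
  then obtain M where "\<forall>u\<ge>M. u \<in> T \<longrightarrow> False" unfolding eventually_at_top_linorder by auto
  moreover obtain t where "t \<in> T" "t > M" using assms by auto
  ultimately show False by auto
qed



theorem corollary27:
  fixes T :: "real set" and t0 b c x0 y0 z0 :: real
    and x y z x' y' z' :: "real \<Rightarrow> real"
  assumes "time_scale T"
    and "\<forall>r. \<exists>t\<in>T. t > r"
    and "t0 \<in> T"
    and "0 \<le> b" and "b < c"
    and "x0 > 0" and "y0 > 0" and "z0 \<ge> 0"
    and "\<forall>t\<in>T. x t > 0 \<and> y t > 0 \<and> z t \<ge> 0"
    and "x t0 = x0" and "y t0 = y0" and "z t0 = z0"
    and "\<forall>t\<in>T. has_delta_derivative T x (x' t) t
                \<and> has_delta_derivative T y (y' t) t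
                \<and> has_delta_derivative T z (z' t) t"
    and "\<forall>t\<in>T. x' t = - (b * x t * y (fwd_jump T t) / (x t + y t))"
    and "\<forall>t\<in>T. y' t = b * x t * y (fwd_jump T t) / (x t + y t) - c * y (fwd_jump T t)"
    and "\<forall>t\<in>T. z' t = c * y (fwd_jump T t)"
  shows "\<exists>\<alpha>. 0 < \<alpha> \<and> \<alpha> < x0 + y0 + z0
           \<and> (x \<longlongrightarrow> \<alpha>) (inf at_top (principal T))
           \<and> (y \<longlongrightarrow> 0) (inf at_top (principal T))
           \<and> (z \<longlongrightarrow> x0 + y0 + z0 - \<alpha>) (inf at_top (principal T))"
proof -
  note ts = assms(1) and unb = assms(2) and t0T = assms(3) and b0 = assms(4) and bc = assms(5)
  note pos = assms(9) and der = assms(13) and ex = assms(14) and ey = assms(15) and ez = assms(16)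
  define F where "F = inf at_top (principal (T::real set))"
  define \<sigma> where "\<sigma> = fwd_jump T"
  define N where "N = x0 + y0 + z0"
  have cl: "closed T" using ts unfolding time_scale_def by auto
  have Tne: "T \<noteq> {}" using t0T by auto
  have Fnb: "F \<noteq> bot" unfolding F_def by (rule F_nb[OF unb])
  have sig: "\<sigma> t \<in> T \<and> t \<le> \<sigma> t" for t unfolding \<sigma>_def by (rule fj_in[OF cl unb])
  have c0: "c > 0" using b0 bc by linarith
  have ysig: "y (\<sigma> t) > 0" if "t \<in> T" for t using pos sig by blast
  have xp: "x t > 0" and yp: "y t > 0" and zp: "z t \<ge> 0" if "t \<in> T" for t using pos that by auto
  have evT: "eventually (\<lambda>u. u \<in> T) F" unfolding F_def eventually_inf_principal by simp
  have evge: "eventually (\<lambda>u. t \<le> u \<and> u \<in> T) F" for t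
  proof -
    have "eventually (\<lambda>u. u \<in> T \<longrightarrow> t \<le> u \<and> u \<in> T) at_top"
      using eventually_ge_at_top[of t] by (rule eventually_mono) simp
    thus ?thesis unfolding F_def eventually_inf_principal .
  qed
  
  have sumder: "has_delta_derivative T (\<lambda>u. x u + y u + z u) 0 \<tau>" if "\<tau> \<in> T" for \<tau>
  proof -
    have d: "has_delta_derivative T x (x' \<tau>) \<tau>" "has_delta_derivative T y (y' \<tau>) \<tau>"
      "has_delta_derivative T z (z' \<tau>) \<tau>" using der that by auto
    have d2: "has_delta_derivative T (\<lambda>u. x u + y u) (x' \<tau> + y' \<tau>) \<tau>"
      by (rule delta_lin2[OF d(1) d(2), where a=1 and b=1]) simp_all
    have "x' \<tau> + y' \<tau> + z' \<tau> = 0" using ex ey ez that by simp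
    thus ?thesis by (intro delta_lin2[OF d2 d(3), where a=1 and b=1]) simp_all
  qed
  have sumN: "x t + y t + z t = N" if "t \<in> T" for t
  proof -
    have "(\<lambda>u. x u + y u + z u) t = (\<lambda>u. x u + y u + z u) t0"
      by (rule delta_const[OF cl that t0T]) (use sumder in blast)
    thus ?thesis unfolding N_def using assms(10-12) by simp
  qed
  
  have xder: "has_delta_derivative T (\<lambda>u. - x u) (- x' \<tau>) \<tau> \<and> - x' \<tau> \<ge> 0" if "\<tau> \<in> T" for \<tau>
  proof
    have d: "has_delta_derivative T x (x' \<tau>) \<tau>" using der that by auto
    show "has_delta_derivative T (\<lambda>u. - x u) (- x' \<tau>) \<tau>"
      by (rule delta_lin2[OF d d, where a="-1" and b=0]) simp_all
    have "b * x \<tau> * y (\<sigma> \<tau>) / (x \<tau> + y \<tau>) \<ge> 0"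
      using b0 xp[OF that] yp[OF that] ysig[OF that] by (simp add: divide_nonneg_pos)
    thus "- x' \<tau> \<ge> 0" using ex that unfolding \<sigma>_def by simp
  qed
  have xanti: "\<forall>s\<in>T. \<forall>t\<in>T. s \<le> t \<longrightarrow> x t \<le> x s"
  proof (intro ballI impI)
    fix s t assume st: "s \<in> T" "t \<in> T" "s \<le> t"
    have "- x s \<le> - x t" using delta_mono[OF cl st, of "\<lambda>u. - x u" "\<lambda>\<tau>. - x' \<tau>"] xder by blast
    thus "x t \<le> x s" by simp
  qed
  have zder: "has_delta_derivative T z (z' \<tau>) \<tau> \<and> z' \<tau> \<ge> 0" if "\<tau> \<in> T" for \<tau>
    using der that ez ysig[OF that] c0 unfolding \<sigma>_def by simp
  have zmono: "\<forall>s\<in>T. \<forall>t\<in>T. s \<le> t \<longrightarrow> - z t \<le> - z s"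
  proof (intro ballI impI)
    fix s t assume st: "s \<in> T" "t \<in> T" "s \<le> t"
    have "z s \<le> z t" using delta_mono[OF cl st, of z z'] zder by blast
    thus "- z t \<le> - z s" by simp
  qed
  have zle: "z t < N" if "t \<in> T" for t using sumN[OF that] xp[OF that] yp[OF that] by linarith
  
  define \<alpha> where "\<alpha> = Inf (x ` T)"
  have xlim: "(x \<longlongrightarrow> \<alpha>) F" unfolding \<alpha>_def F_def
    by (rule antimono_lim[OF xanti _ Tne, of 0]) (simp add: xp less_imp_le)
  have "((\<lambda>u. - z u) \<longlongrightarrow> Inf ((\<lambda>u. - z u) ` T)) F" unfolding F_def
    by (rule antimono_lim[OF zmono _ Tne, of "- N"]) (use zle in force)
  then obtain \<zeta> where zlim: "(z \<longlongrightarrow> \<zeta>) F"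
    using tendsto_minus by fastforce
  define L where "L = N - \<alpha> - \<zeta>"
  have "((\<lambda>u. N - x u - z u) \<longlongrightarrow> L) F" unfolding L_def by (intro tendsto_intros xlim zlim)
  moreover have "eventually (\<lambda>u. N - x u - z u = y u) F"
    using evT by (rule eventually_mono) (use sumN in force)
  ultimately have ylim: "(y \<longlongrightarrow> L) F" using tendsto_cong by force
  have L0: "L \<ge> 0"
    by (rule tendsto_lowerbound[OF ylim _ Fnb]) (use evT in \<open>rule eventually_mono, use yp in force\<close>)
  have L00: "L = 0"
  proof (rule ccontr)
    assume "L \<noteq> 0"
    hence Lp: "L > 0" using L0 by auto
    have "eventually (\<lambda>u. L / 2 < y u) F" using ylim Lp by (intro order_tendstoD(1)) auto
    hence "eventually (\<lambda>u. u \<in> T \<longrightarrow> L / 2 < y u) at_top" unfolding F_def eventually_inf_principal .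
    then obtain M where M: "\<forall>u\<ge>M. u \<in> T \<longrightarrow> L / 2 < y u" unfolding eventually_at_top_linorder by auto
    obtain t1 where t1: "t1 \<in> T" "t1 > M" using unb by auto
    define k where "k = c * L / 2"
    have k0: "k > 0" unfolding k_def using c0 Lp by simp
    have hder: "has_delta_derivative T (\<lambda>u. z u - k * u) (z' \<tau> - k) \<tau> \<and> z' \<tau> - k \<ge> 0"
      if "\<tau> \<in> T" "t1 \<le> \<tau>" for \<tau>
    proof
      have d: "has_delta_derivative T z (z' \<tau>) \<tau>" using der that by auto
      show "has_delta_derivative T (\<lambda>u. z u - k * u) (z' \<tau> - k) \<tau>"
        by (rule delta_lin2[OF d delta_id, where a=1 and b="-k"]) simp_all
      have "\<sigma> \<tau> \<in> T" "\<sigma> \<tau> \<ge> M" using sig[of \<tau>] that t1 by auto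
      hence "L / 2 < y (\<sigma> \<tau>)" using M by auto
      hence "c * (L / 2) \<le> c * y (\<sigma> \<tau>)" using c0 by simp
      thus "z' \<tau> - k \<ge> 0" using ez that unfolding k_def \<sigma>_def by simp
    qed
    obtain u where u: "u \<in> T" "u > t1 + N / k" using unb by auto
    have "N > 0" unfolding N_def using assms(6-8) by linarith
    hence "N / k > 0" using k0 by simp
    hence tu: "t1 \<le> u" using u by linarith
    have "z t1 - k * t1 \<le> z u - k * u"
      using delta_mono[OF cl t1(1) u(1) tu, of "\<lambda>u. z u - k * u" "\<lambda>\<tau>. z' \<tau> - k"] hder by blast
    moreover have "N / k < u - t1" using u by linarith
    hence "N < (u - t1) * k" using k0 by (simp add: pos_divide_less_eq)
    moreover have "k * u - k * t1 = (u - t1) * k" by (simp add: algebra_simps)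
    ultimately have "z u > N" using zp[OF t1(1)] by linarith
    thus False using zle[OF u(1)] by linarith
  qed
  
  have bddx: "bdd_below (x ` T)" unfolding bdd_below_def using xp by (intro exI[of _ 0]) (auto intro: less_imp_le)
  have a0: "\<alpha> \<ge> 0" unfolding \<alpha>_def using Tne xp by (intro cInf_greatest) (auto intro: less_imp_le)
  have ax: "\<alpha> \<le> x0" unfolding \<alpha>_def using cInf_lower[OF _ bddx, of "x t0"] t0T assms(10) by (metis imageI)
  have aN: "\<alpha> < N" using ax assms(7,8) unfolding N_def by linarith
  have apos: "\<alpha> > 0"
  proof (rule ccontr)
    assume "\<not> \<alpha> > 0"
    hence az: "\<alpha> = 0" using a0 by auto
    have Q: "\<forall>t\<in>T. x t \<le> (b / c) ^ n * (x t + y t)" for n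
    proof (induction n)
      case 0
      then show ?case using yp by (simp add: less_imp_le)
    next
      case (Suc n)
      define q where "q = (b / c) ^ n"
      have bc0: "0 \<le> b / c" "b / c \<le> 1" using b0 c0 bc by auto
      have q0: "0 \<le> q" "q \<le> 1" unfolding q_def using bc0 by (auto intro: power_le_one)
      have bq: "b * q \<le> b" using q0 b0 by (simp add: mult_left_le)
      hence cbq: "c - b * q > 0" using bc by linarith
      define lm where "lm = b * q / (c - b * q)"
      have l0: "lm \<ge> 0" unfolding lm_def using b0 q0 cbq by simp
      have lam: "lm * (c - b * q) = b * q" unfolding lm_def using cbq by simp
      have lam2: "(1 + lm) * b * q = lm * c"
      proof -
        have "(1 + lm) * b * q = b * q + lm * (b * q)" by (simp add: algebra_simps)
        also have "\<dots> = lm * (c - b * q) + lm * (b * q)" using lam by simp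
        also have "\<dots> = lm * c" by (simp add: algebra_simps)
        finally show ?thesis .
      qed
      have Wder: "has_delta_derivative T (\<lambda>u. x u - lm * y u) (x' \<tau> - lm * y' \<tau>) \<tau> \<and> x' \<tau> - lm * y' \<tau> \<ge> 0"
        if tT: "\<tau> \<in> T" for \<tau>
      proof
        have d: "has_delta_derivative T x (x' \<tau>) \<tau>" "has_delta_derivative T y (y' \<tau>) \<tau>" using der tT by auto
        show "has_delta_derivative T (\<lambda>u. x u - lm * y u) (x' \<tau> - lm * y' \<tau>) \<tau>"
          by (rule delta_lin2[OF d(1) d(2), where a=1 and b="-lm"]) simp_all
        define X where "X = x \<tau>"
        define V where "V = y \<tau>"
        define Y where "Y = y (\<sigma> \<tau>)"
        have XV: "X > 0" "V > 0" "Y > 0" using xp[OF tT] yp[OF tT] ysig[OF tT] unfolding X_def V_def Y_def by auto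
        define r where "r = X / (X + V)"
        have "X \<le> q * (X + V)" using Suc.IH tT unfolding q_def X_def V_def by auto
        hence rq: "r \<le> q" unfolding r_def using XV by (simp add: pos_divide_le_eq)
        have e1: "b * X * Y / (X + V) = b * Y * r" unfolding r_def by simp
        have "x' \<tau> - lm * y' \<tau> = - (b * Y * r) - lm * (b * Y * r - c * Y)"
          using ex ey tT e1 unfolding X_def V_def Y_def \<sigma>_def by simp
        also have "\<dots> = Y * (lm * c - (1 + lm) * b * r)" by (simp add: algebra_simps)
        finally have eqW: "x' \<tau> - lm * y' \<tau> = Y * (lm * c - (1 + lm) * b * r)" .
        have "(1 + lm) * b * r \<le> (1 + lm) * b * q" using rq l0 b0 by (intro mult_left_mono) auto
        hence "lm * c - (1 + lm) * b * r \<ge> 0" using lam2 by linarith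
        thus "x' \<tau> - lm * y' \<tau> \<ge> 0" using eqW XV by simp
      qed
      have Wmono: "x s - lm * y s \<le> x t - lm * y t" if "s \<in> T" "t \<in> T" "s \<le> t" for s t
        using delta_mono[OF cl that, of "\<lambda>u. x u - lm * y u" "\<lambda>\<tau>. x' \<tau> - lm * y' \<tau>"] Wder by blast
      have Wlim: "((\<lambda>u. x u - lm * y u) \<longlongrightarrow> 0) F"
        using tendsto_diff[OF xlim tendsto_mult_left[OF ylim, of lm]] az L00 by simp
      show ?case
      proof
        fix t assume tT: "t \<in> T"
        have "eventually (\<lambda>u. x t - lm * y t \<le> x u - lm * y u) F"
          using evge[of t] by (rule eventually_mono) (simp add: Wmono tT)
        hence "x t - lm * y t \<le> 0" by (rule tendsto_lowerbound[OF Wlim _ Fnb])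
        hence "x t \<le> lm * y t" by linarith
        hence "x t * (c - b * q) \<le> lm * y t * (c - b * q)" using cbq by (intro mult_right_mono) auto
        also have "lm * y t * (c - b * q) = (lm * (c - b * q)) * y t" by (simp add: algebra_simps)
        also have "\<dots> = b * q * y t" using lam by simp
        finally have "x t * (c - b * q) \<le> b * q * y t" .
        hence "c * x t \<le> b * q * (x t + y t)" by (simp add: algebra_simps)
        hence "x t \<le> b * q * (x t + y t) / c" using c0 by (simp add: pos_le_divide_eq mult.commute)
        thus "x t \<le> (b / c) ^ Suc n * (x t + y t)" unfolding q_def by simp
      qed
    qed
    have lim: "(\<lambda>n. (b / c) ^ n * (x t0 + y t0)) \<longlonglongrightarrow> 0 * (x t0 + y t0)"
      using b0 bc c0 by (intro tendsto_intros LIMSEQ_power_zero) auto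
    have "x t0 \<le> 0"
      by (rule LIMSEQ_le_const[OF lim[simplified]]) (use Q t0T in auto)
    thus False using xp[OF t0T] by simp
  qed
  have "(z \<longlongrightarrow> N - \<alpha>) F" using zlim L00 unfolding L_def by simp
  thus ?thesis using apos aN xlim ylim L00 unfolding F_def N_def by auto
qed
end
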